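(* For every odd integer $g\geqslant3$, the ideal $J_g^+\subset\mathbb{C}[\alpha,\gamma]$ is generated by $\zeta_g^+$ together with $\gamma J_{g-2}^+$. Moreover, $\gamma^i\zeta^+_{g-2i}\in J_g^+$ for all integers $i\geqslant0$.
   Context: $\zeta_k^+\in\mathbb{C}[\alpha,\gamma]$: $\zeta^+_i=0$ for $i<0$, $\zeta^+_0=1$, $\zeta^+_{k+1}=\alpha\zeta^+_k+16k^2\zeta^+_{k-1}+2k(k-1)\gamma\zeta^+_{k-2}$ for $k$ even and $\zeta^+_{k+1}=\alpha\zeta^+_k+2k(k-1)\gamma\zeta^+_{k-2}$ for $k$ odd ($k\geqslant0$) (the specialization at $\beta=8$ of $\zeta_{k+1}=\alpha\zeta_k+k^2(\beta+(-1)^k8)\zeta_{k-1}+2k(k-1)\gamma\zeta_{k-2}$); $J^+_k=(\zeta^+_k,\zeta^+_{k+1},\zeta^+_{k+2})$. *)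

theory Defs
  imports "HOL-Computational_Algebra.Polynomial"
begin

text \<open>C[alpha,gamma] is modelled as complex poly poly = (C[alpha])[gamma]:
  the outer variable is gamma, the inner one alpha.\<close>
type_synonym cpoly2 = "complex poly poly"

definition var_alpha :: cpoly2 where "var_alpha = [:[:0, 1:]:]"
definition var_gamma :: cpoly2 where "var_gamma = [:0, 1:]"

definition ideal_span :: "'a::comm_ring_1 set \<Rightarrow> 'a set" where
  "ideal_span S = {x. \<exists>A f. finite A \<and> A \<subseteq> S \<and> x = (\<Sum>a\<in>A. f a * a)}"

text \<open>zeta^+_k for k \<ge> 0 (beta = 8 specialisation).
  zeta_{k+1} = alpha zeta_k + [k even] 16 k^2 zeta_{k-1} + 2k(k-1) gamma zeta_{k-2}.\<close>
fun zeta_nat :: "nat \<Rightarrow> cpoly2" where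
  "zeta_nat 0 = 1"
| "zeta_nat (Suc 0) = var_alpha * zeta_nat 0"
| "zeta_nat (Suc (Suc 0)) = var_alpha * zeta_nat 1"
| "zeta_nat (Suc (Suc (Suc n))) =
     var_alpha * zeta_nat (n + 2)
     + (if even (n + 2) then of_nat (16 * (n + 2)^2) * zeta_nat (n + 1) else 0)
     + of_nat (2 * (n + 2) * (n + 1)) * var_gamma * zeta_nat n"

definition zeta_plus :: "int \<Rightarrow> cpoly2" where
  "zeta_plus k = (if k < 0 then 0 else zeta_nat (nat k))"

definition J_plus :: "int \<Rightarrow> cpoly2 set" where
  "J_plus k = ideal_span {zeta_plus k, zeta_plus (k + 1), zeta_plus (k + 2)}"

end

theory Submission
  imports Defs
begin

lemma span_base: "a \<in> S \<Longrightarrow> a \<in> ideal_span S"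
  unfolding ideal_span_def
  by (rule CollectI, rule exI[of _ "{a}"], rule exI[of _ "\<lambda>_. 1"]) simp

lemma span_intro:
  assumes "finite A" "A \<subseteq> S" "x = (\<Sum>a\<in>A. f a * a)"
  shows "x \<in> ideal_span S"
  unfolding ideal_span_def using assms by (intro CollectI exI conjI)

lemma span_zero: "0 \<in> ideal_span S"
  unfolding ideal_span_def
  by (rule CollectI, rule exI[of _ "{}"]) simp

lemma span_add:
  assumes "x \<in> ideal_span S" "y \<in> ideal_span S"
  shows "x + y \<in> ideal_span S"
proof -
  obtain A f where A: "finite A" "A \<subseteq> S" "x = (\<Sum>a\<in>A. f a * a)"
    using assms(1) unfolding ideal_span_def by blast
  obtain B h where B: "finite B" "B \<subseteq> S" "y = (\<Sum>a\<in>B. h a * a)"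
    using assms(2) unfolding ideal_span_def by blast
  define F where "F a = (if a \<in> A then f a else 0) + (if a \<in> B then h a else 0)" for a
  have gen: "(\<Sum>a\<in>A\<union>B. (if a \<in> C then k a else 0) * a) = (\<Sum>a\<in>C. k a * a)"
    if "C \<subseteq> A \<union> B" for C and k :: "'a \<Rightarrow> 'a"
  proof -
    have "(\<Sum>a\<in>A\<union>B. (if a \<in> C then k a else 0) * a) = (\<Sum>a\<in>A\<union>B. if a \<in> C then k a * a else 0)"
      by (rule sum.cong) auto
    also have "\<dots> = (\<Sum>a\<in>(A\<union>B)\<inter>C. k a * a)"
      using A(1) B(1) by (simp add: sum.inter_restrict)
    also have "(A\<union>B)\<inter>C = C" using that by blast
    finally show ?thesis .
  qed
  have x: "x = (\<Sum>a\<in>A\<union>B. (if a \<in> A then f a else 0) * a)"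
    using gen[of A f] A(3) by simp
  have y: "y = (\<Sum>a\<in>A\<union>B. (if a \<in> B then h a else 0) * a)"
    using gen[of B h] B(3) by simp
  have "x + y = (\<Sum>a\<in>A\<union>B. F a * a)"
    unfolding x y F_def by (simp only: distrib_right sum.distrib)
  moreover have "finite (A \<union> B)" "A \<union> B \<subseteq> S" using A B by auto
  ultimately show ?thesis by (intro span_intro[of "A \<union> B" S _ F]) simp_all
qed

lemma span_mult:
  assumes "x \<in> ideal_span S"
  shows "c * x \<in> ideal_span S"
proof -
  obtain A f where A: "finite A" "A \<subseteq> S" "x = (\<Sum>a\<in>A. f a * a)"
    using assms unfolding ideal_span_def by blast
  have "c * x = (\<Sum>a\<in>A. (c * f a) * a)"
    unfolding A(3) by (simp add: sum_distrib_left mult.assoc)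
  then show ?thesis by (intro span_intro[of A S _ "\<lambda>a. c * f a"] A(1,2))
qed

lemma span_diff:
  assumes "x \<in> ideal_span S" "y \<in> ideal_span S"
  shows "x - y \<in> ideal_span S"
  using span_add[OF assms(1) span_mult[OF assms(2), of "-1"]] by simp

lemma span_sum:
  "finite A \<Longrightarrow> (\<And>a. a \<in> A \<Longrightarrow> h a \<in> ideal_span S) \<Longrightarrow> (\<Sum>a\<in>A. h a) \<in> ideal_span S"
  by (induction A rule: finite_induct) (auto intro: span_zero span_add)

lemma span_mult_gen:
  assumes "\<And>a. a \<in> S \<Longrightarrow> c * a \<in> ideal_span T" "x \<in> ideal_span S"
  shows "c * x \<in> ideal_span T"
proof -
  obtain A f where A: "finite A" "A \<subseteq> S" "x = (\<Sum>a\<in>A. f a * a)"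
    using assms(2) unfolding ideal_span_def by blast
  have "c * x = (\<Sum>a\<in>A. f a * (c * a))"
    using A by (simp add: sum_distrib_left mult.assoc mult.left_commute)
  also have "\<dots> \<in> ideal_span T"
    apply (rule span_sum)
    using A apply simp
    apply (rule span_mult)
    using A assms(1) by auto
  finally show ?thesis .
qed

lemma span_sub:
  assumes "S \<subseteq> ideal_span T"
  shows "ideal_span S \<subseteq> ideal_span T"
  using span_mult_gen[of S 1 T] assms by auto

lemma span_subJ: "S \<subseteq> J_plus k \<Longrightarrow> ideal_span S \<subseteq> J_plus k"
  unfolding J_plus_def by (rule span_sub)

lemma zeta_rec:
  assumes "k \<ge> 2"
  shows "zeta_nat (k + 1) = var_alpha * zeta_nat k
     + (if even k then of_nat (16 * k^2) * zeta_nat (k - 1) else 0)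
     + of_nat (2 * k * (k - 1)) * var_gamma * zeta_nat (k - 2)"
proof -
  obtain n where n: "k = Suc (Suc n)" using assms by (metis add_2_eq_Suc le_Suc_ex add.commute)
  have "zeta_nat (Suc (Suc (Suc n))) = var_alpha * zeta_nat (n + 2)
     + (if even (n + 2) then of_nat (16 * (n + 2)^2) * zeta_nat (n + 1) else 0)
     + of_nat (2 * (n + 2) * (n + 1)) * var_gamma * zeta_nat n"
    by (rule zeta_nat.simps(4))
  moreover have e: "n + 2 = k" "n + 1 = k - 1" "Suc (Suc (Suc n)) = k + 1" using n by auto
  moreover have e2: "n = k - 2" using n by auto
  ultimately show ?thesis unfolding e by (simp only: e2)
qed

lemma cancel_const:
  assumes "N \<noteq> 0" "of_nat N * y \<in> ideal_span S"
  shows "(y :: cpoly2) \<in> ideal_span S"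
proof -
  have "[:[:inverse (of_nat N :: complex):]:] * (of_nat N * y) = y"
    using assms(1) by (simp add: of_nat_poly mult.assoc[symmetric] one_pCons[symmetric])
  then show ?thesis using span_mult[OF assms(2)] by metis
qed

lemma part1:
  fixes m :: nat
  assumes "odd m" "m \<ge> 3"
  shows "J_plus (int m) = ideal_span (insert (zeta_plus (int m)) ((\<lambda>x. var_gamma * x) ` J_plus (int m - 2)))"
proof -
  let ?R = "ideal_span (insert (zeta_plus (int m)) ((\<lambda>x. var_gamma * x) ` J_plus (int m - 2)))"
  let ?J = "ideal_span {zeta_nat m, zeta_nat (m+1), zeta_nat (m+2)}"
  have zp: "zeta_plus (int m + j) = zeta_nat (m + nat j)" if "j \<ge> 0" for j
    using that by (simp add: zeta_plus_def nat_add_distrib)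
  have zm: "zeta_plus (int m - j) = zeta_nat (m - nat j)" if "j \<ge> 0" "j \<le> 2" for j
    using that assms by (simp add: zeta_plus_def nat_diff_distrib)
  have Jm: "J_plus (int m - 2) = ideal_span {zeta_nat (m-2), zeta_nat (m-1), zeta_nat m}"
    unfolding J_plus_def using zm[of 2] zm[of 1] zm[of 0] by (simp add: algebra_simps)
  have Jg: "J_plus (int m) = ?J"
    unfolding J_plus_def using zp[of 0] zp[of 1] zp[of 2] by simp
  have r1: "zeta_nat (m + 1) = var_alpha * zeta_nat m + of_nat (2 * m * (m - 1)) * var_gamma * zeta_nat (m - 2)"
    using zeta_rec[of m] assms by simp
  have r2: "zeta_nat (m + 2) = var_alpha * zeta_nat (m+1) + of_nat (16 * (m+1)^2) * zeta_nat m
      + of_nat (2 * (m+1) * m) * var_gamma * zeta_nat (m - 1)"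
    using zeta_rec[of "m+1"] assms by simp
  have inJm: "zeta_nat (m-2) \<in> J_plus (int m - 2)" "zeta_nat (m-1) \<in> J_plus (int m - 2)"
      "zeta_nat m \<in> J_plus (int m - 2)"
    unfolding Jm by (auto intro: span_base)
  have Rg: "var_gamma * zeta_nat (m-2) \<in> ?R" "var_gamma * zeta_nat (m-1) \<in> ?R"
    using inJm by (auto intro!: span_base)
  have Rz: "zeta_nat m \<in> ?R" using zp[of 0] by (auto intro: span_base)
  have R1: "zeta_nat (m+1) \<in> ?R"
    unfolding r1 mult.assoc by (rule span_add; rule span_mult; fact)
  have R2: "zeta_nat (m+2) \<in> ?R"
    unfolding r2 mult.assoc by ((rule span_add)+; rule span_mult; fact)
  have "?J \<subseteq> ?R" using Rz R1 R2 by (intro span_sub) auto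
  moreover have "?R \<subseteq> ?J"
  proof (rule span_sub)
    have J0: "zeta_nat m \<in> ?J" "zeta_nat (m+1) \<in> ?J" "zeta_nat (m+2) \<in> ?J"
      by (auto intro: span_base)
    have Jg1: "var_gamma * zeta_nat (m-2) \<in> ?J"
    proof (rule cancel_const[of "2 * m * (m - 1)"])
      show "2 * m * (m - 1) \<noteq> 0" using assms by simp
      have "of_nat (2 * m * (m - 1)) * (var_gamma * zeta_nat (m-2)) = zeta_nat (m+1) - var_alpha * zeta_nat m"
        unfolding r1 by (simp add: mult.assoc)
      then show "of_nat (2 * m * (m - 1)) * (var_gamma * zeta_nat (m-2)) \<in> ?J"
        using J0 by (simp add: span_diff span_mult)
    qed
    have Jg2: "var_gamma * zeta_nat (m-1) \<in> ?J"
    proof (rule cancel_const[of "2 * (m+1) * m"])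
      show "2 * (m+1) * m \<noteq> 0" using assms by simp
      have "of_nat (2 * (m+1) * m) * (var_gamma * zeta_nat (m-1)) = zeta_nat (m+2) - var_alpha * zeta_nat (m+1)
         - of_nat (16 * (m+1)^2) * zeta_nat m"
        unfolding r2 by (simp add: mult.assoc)
      then show "of_nat (2 * (m+1) * m) * (var_gamma * zeta_nat (m-1)) \<in> ?J"
        using J0 by (simp add: span_diff span_mult)
    qed
    have Jg3: "var_gamma * zeta_nat m \<in> ?J" using J0 by (simp add: span_mult)
    have "var_gamma * x \<in> ?J" if "x \<in> J_plus (int m - 2)" for x
      using that unfolding Jm
      by (rule span_mult_gen[rotated]) (use Jg1 Jg2 Jg3 in auto)
    then show "insert (zeta_plus (int m)) ((\<lambda>x. var_gamma * x) ` J_plus (int m - 2)) \<subseteq> ?J"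
      using J0 zp[of 0] by auto
  qed
  ultimately show ?thesis unfolding Jg by blast
qed

lemma part2:
  fixes m :: nat
  assumes "odd m"
  shows "var_gamma ^ i * zeta_plus (int m - 2 * int i) \<in> J_plus (int m)"
  using assms
proof (induction m arbitrary: i rule: less_induct)
  case (less m)
  show ?case
  proof (cases i)
    case 0
    then show ?thesis unfolding J_plus_def by (auto intro: span_base)
  next
    case (Suc j)
    show ?thesis
    proof (cases "m \<ge> 3")
      case True
      have IH: "var_gamma ^ j * zeta_plus (int (m-2) - 2 * int j) \<in> J_plus (int (m-2))"
        using less.IH[of "m-2" j] less.prems True by simp
      have e: "int (m-2) = int m - 2" "int (m-2) - 2 * int j = int m - 2 * int i"
        using True Suc by auto
      have e3: "int m - 2 - 2 * int j = int m - 2 * int i" using Suc by auto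
      have IH': "var_gamma ^ j * zeta_plus (int m - 2 * int i) \<in> J_plus (int m - 2)"
        using IH unfolding e(1) e3 .
      have "var_gamma * (var_gamma ^ j * zeta_plus (int m - 2 * int i))
          \<in> ideal_span (insert (zeta_plus (int m)) ((\<lambda>x. var_gamma * x) ` J_plus (int m - 2)))"
        by (rule span_base, rule insertI2, rule imageI, rule IH')
      then have "var_gamma * (var_gamma ^ j * zeta_plus (int m - 2 * int i)) \<in> J_plus (int m)"
        unfolding part1[OF less.prems True] .
      then show ?thesis using Suc by (simp add: mult.assoc)
    next
      case False
      then have "m \<le> 1" using less.prems by presburger
      then have "int m - 2 * int i < 0" using Suc by simp
      then show ?thesis by (simp add: zeta_plus_def J_plus_def span_zero)
    qed
  qed
qed

theorem lemma5p8:
  fixes g :: int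
  assumes "odd g" and "g \<ge> 3"
  shows "J_plus g = ideal_span (insert (zeta_plus g) ((\<lambda>x. var_gamma * x) ` J_plus (g - 2)))
    \<and> (\<forall>i::nat. var_gamma ^ i * zeta_plus (g - 2 * int i) \<in> J_plus g)"
proof -
  obtain m where m: "g = int m" using assms by (metis nonneg_eq_int order_trans zero_le_numeral)
  have "odd m" "m \<ge> 3" using assms m by auto
  then show ?thesis using part1 part2 m by blast
qed

end
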